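(* Let $p\in(0,1)$. Then $h^{\Phi_p}(\mathbb R^n)\subsetneqq h^{\phi_p}(\mathbb R^n)$.
   Context: $\Phi_p(\tau):=\tau/(1+\tau^{1-p})$. For $x\in\mathbb R^n$, $t\ge0$, $\phi_p(x,t):=\frac{t}{1+[t(1+|x|)^n]^{1-p}}$ when $n(1/p-1)\notin\mathbb N$ and $\phi_p(x,t):=\frac{t}{1+[t(1+|x|)^n]^{1-p}[\log(e+|x|)]^p}$ when $n(1/p-1)\in\mathbb N$. $\|f\|_{L^{\Phi_p}}:=\inf\{\lambda>0:\int\Phi_p(|f(x)|/\lambda)dx\le1\}$ and $\|f\|_{L^{\phi_p}}:=\inf\{\lambda>0:\int\phi_p(x,|f(x)|/\lambda)dx\le1\}$. For fixed $\varphi\in\mathcal S$ with $\int\varphi\ne0$, $m(f,\varphi)(x):=\sup_{s\in(0,1)}|f*\varphi_s(x)|$, $\varphi_s(x)=s^{-n}\varphi(x/s)$; $h^{\Phi_p}(\mathbb R^n):=\{f\in\mathcal S':\|m(f,\varphi)\|_{L^{\Phi_p}}<\infty\}$ and $h^{\phi_p}(\mathbb R^n):=\{f\in\mathcal S':\|m(f,\varphi)\|_{L^{\phi_p}}<\infty\}$. *)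

theory Defs
  imports "HOL-Analysis.Analysis"
begin

definition dirderiv :: "'a::euclidean_space \<Rightarrow> ('a \<Rightarrow> complex) \<Rightarrow> 'a \<Rightarrow> complex" where
  "dirderiv v f x = vector_derivative (\<lambda>t::real. f (x + t *\<^sub>R v)) (at 0)"

fun ideriv :: "'a::euclidean_space list \<Rightarrow> ('a \<Rightarrow> complex) \<Rightarrow> 'a \<Rightarrow> complex" where
  "ideriv [] f = f"
| "ideriv (v # vs) f = dirderiv v (ideriv vs f)"

definition schwartz :: "('a::euclidean_space \<Rightarrow> complex) \<Rightarrow> bool" where
  "schwartz f \<longleftrightarrow>
     (\<forall>ds. set ds \<subseteq> Basis \<longrightarrow>
        (\<forall>v\<in>Basis. \<forall>x. (\<lambda>t::real. ideriv ds f (x + t *\<^sub>R v)) differentiable (at 0)) \<and>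
        (\<forall>N::nat. \<exists>C. \<forall>x. (1 + norm x) ^ N * norm (ideriv ds f x) \<le> C))"

definition sw_seminorm :: "nat \<Rightarrow> 'a::euclidean_space list \<Rightarrow> ('a \<Rightarrow> complex) \<Rightarrow> real" where
  "sw_seminorm N ds f = (SUP x. (1 + norm x) ^ N * norm (ideriv ds f x))"

text \<open>Tempered distributions: continuous linear functionals on the Schwartz space
  (only their values on Schwartz functions matter).\<close>
definition tempered :: "(('a::euclidean_space \<Rightarrow> complex) \<Rightarrow> complex) \<Rightarrow> bool" where
  "tempered T \<longleftrightarrow>
     (\<forall>f g. schwartz f \<longrightarrow> schwartz g \<longrightarrow> T (\<lambda>x. f x + g x) = T f + T g) \<and>
     (\<forall>f c. schwartz f \<longrightarrow> T (\<lambda>x. c * f x) = c * T f) \<and>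
     (\<exists>C N M. \<forall>f. schwartz f \<longrightarrow>
        norm (T f) \<le> C * (\<Sum>ds\<in>{ds. set ds \<subseteq> Basis \<and> length ds \<le> M}. sw_seminorm N ds f))"

definition dilate :: "real \<Rightarrow> ('a::euclidean_space \<Rightarrow> complex) \<Rightarrow> 'a \<Rightarrow> complex" where
  "dilate s \<phi> x = complex_of_real (1 / s ^ DIM('a)) * \<phi> ((1 / s) *\<^sub>R x)"

definition dconv :: "(('a::euclidean_space \<Rightarrow> complex) \<Rightarrow> complex) \<Rightarrow> ('a \<Rightarrow> complex) \<Rightarrow> 'a \<Rightarrow> complex" where
  "dconv T \<psi> x = T (\<lambda>y. \<psi> (x - y))"

definition locmax :: "(('a::euclidean_space \<Rightarrow> complex) \<Rightarrow> complex) \<Rightarrow> ('a \<Rightarrow> complex) \<Rightarrow> 'a \<Rightarrow> ennreal" where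
  "locmax T \<phi> x = (SUP s\<in>{0<..<1::real}. ennreal (norm (dconv T (dilate s \<phi>) x)))"

definition PhiP :: "real \<Rightarrow> real \<Rightarrow> real" where
  "PhiP p \<tau> = \<tau> / (1 + \<tau> powr (1 - p))"

definition phiP :: "real \<Rightarrow> 'a::euclidean_space \<Rightarrow> real \<Rightarrow> real" where
  "phiP p x t =
     (if \<exists>k::nat. real DIM('a) * (1 / p - 1) = real k
      then t / (1 + (t * (1 + norm x) ^ DIM('a)) powr (1 - p) * (ln (exp 1 + norm x)) powr p)
      else t / (1 + (t * (1 + norm x) ^ DIM('a)) powr (1 - p)))"

text \<open>Extension to the value infinity (both functions tend to infinity as t does).\<close>
definition ext_inf :: "(real \<Rightarrow> real) \<Rightarrow> ennreal \<Rightarrow> ennreal" where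
  "ext_inf F t = (if t = \<infinity> then \<infinity> else ennreal (F (enn2real t)))"

text \<open>A (possibly infinite) nonnegative function has finite Luxemburg quasi-norm iff
  the set of admissible lambda is nonempty, i.e. the infimum is finite.\<close>
definition LPhi_norm :: "real \<Rightarrow> ('a::euclidean_space \<Rightarrow> ennreal) \<Rightarrow> ennreal" where
  "LPhi_norm p g = (INF l\<in>{l::real. 0 < l \<and>
        (\<integral>\<^sup>+ x. ext_inf (PhiP p) (g x / ennreal l) \<partial>lborel) \<le> 1}. ennreal l)"

definition Lphi_norm :: "real \<Rightarrow> ('a::euclidean_space \<Rightarrow> ennreal) \<Rightarrow> ennreal" where
  "Lphi_norm p g = (INF l\<in>{l::real. 0 < l \<and>
        (\<integral>\<^sup>+ x. ext_inf (phiP p x) (g x / ennreal l) \<partial>lborel) \<le> 1}. ennreal l)"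

definition h_PhiP :: "real \<Rightarrow> ('a::euclidean_space \<Rightarrow> complex) \<Rightarrow> (('a \<Rightarrow> complex) \<Rightarrow> complex) set" where
  "h_PhiP p \<phi> = {T. tempered T \<and> LPhi_norm p (locmax T \<phi>) < \<infinity>}"

definition h_phiP :: "real \<Rightarrow> ('a::euclidean_space \<Rightarrow> complex) \<Rightarrow> (('a \<Rightarrow> complex) \<Rightarrow> complex) set" where
  "h_phiP p \<phi> = {T. tempered T \<and> Lphi_norm p (locmax T \<phi>) < \<infinity>}"

end

theory Submission
  imports Defs
begin


lemma g_mono:
  fixes s t c q :: real
  assumes "0 \<le> s" "s \<le> t" "0 \<le> c" "0 < q" "q < 1"
  shows "s / (1 + c * s powr q) \<le> t / (1 + c * t powr q)"
proof (cases "s = 0")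
  case True then show ?thesis using assms by (simp add: divide_nonneg_pos)
next
  case False
  then have s: "0 < s" using assms by simp
  then have t: "0 < t" using assms by simp
  have "t powr (q - 1) \<le> s powr (q - 1)"
    using s assms by (intro powr_mono2') auto
  then have "s * t * t powr (q - 1) \<le> s * t * s powr (q - 1)"
    using s t by (intro mult_left_mono) auto
  then have "s * t powr q \<le> t * s powr q"
    using s t by (simp add: powr_diff powr_one_gt_zero_iff field_simps powr_add[symmetric] powr_minus)
  then have "s * (1 + c * t powr q) \<le> t * (1 + c * s powr q)"
  proof -
    have "c * (s * t powr q) \<le> c * (t * s powr q)" using \<open>s * t powr q \<le> t * s powr q\<close> assms(3) by (rule mult_left_mono)
    then show ?thesis using assms(2) by (simp add: algebra_simps)
  qed
  then show ?thesis using s t assms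
    by (simp add: divide_simps add_pos_nonneg)
qed

lemma phiP_form:
  fixes x :: "'a::euclidean_space"
  assumes p: "0 < p" "p < 1"
  shows "\<exists>c\<ge>((1 + norm x) ^ DIM('a)) powr (1 - p). \<forall>t\<ge>0. phiP p x t = t / (1 + c * t powr (1 - p))"
proof -
  define W where "W = (1 + norm x) ^ DIM('a)"
  have W1: "1 \<le> W" unfolding W_def by simp
  have Wq: "1 \<le> W powr (1 - p)" using W1 p by (intro ge_one_powr_ge_zero) auto
  have L1: "1 \<le> ln (exp 1 + norm x)"
    by (subst ln_ge_iff) (auto intro: add_pos_nonneg)
  have L: "1 \<le> ln (exp 1 + norm x) powr p" using L1 p by (intro ge_one_powr_ge_zero) auto
  define c where "c = (if \<exists>k::nat. real DIM('a) * (1 / p - 1) = real k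
     then W powr (1 - p) * ln (exp 1 + norm x) powr p else W powr (1 - p))"
  have "c \<ge> W powr (1 - p)"
    using L Wq unfolding c_def by (auto intro: order_trans[OF _ mult_left_mono[of 1]])
  moreover have "phiP p x t = t / (1 + c * t powr (1 - p))" if "t \<ge> 0" for t
    using that W1 unfolding phiP_def c_def W_def
    by (auto simp: powr_mult mult_ac)
  ultimately show ?thesis unfolding W_def by blast
qed

lemma phiP_mono:
  fixes x :: "'a::euclidean_space"
  assumes p: "0 < p" "p < 1" and "0 \<le> s" "s \<le> t"
  shows "phiP p x s \<le> phiP p x t"
proof -
  obtain c where c: "c \<ge> ((1 + norm x) ^ DIM('a)) powr (1 - p)"
    "\<And>t. t\<ge>0 \<Longrightarrow> phiP p x t = t / (1 + c * t powr (1 - p))"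
    using phiP_form[OF p, of x] by blast
  have "0 \<le> c" using c(1) by (meson order_trans powr_ge_zero)
  then show ?thesis using assms c(2)[of s] c(2)[of t] g_mono[of s t c "1 - p"] by simp
qed

lemma PhiP_mono:
  assumes p: "0 < p" "p < 1" and "0 \<le> s" "s \<le> t"
  shows "PhiP p s \<le> PhiP p t"
  using assms g_mono[of s t 1 "1 - p"] unfolding PhiP_def by simp

lemma PhiP_pos:
  assumes "0 < t" shows "0 < PhiP p t"
  using assms unfolding PhiP_def by (simp add: add_pos_nonneg)

lemma phiP_nonneg:
  fixes x :: "'a::euclidean_space"
  assumes p: "0 < p" "p < 1" and "0 \<le> t"
  shows "0 \<le> phiP p x t"
proof -
  have "phiP p x 0 = 0" using phiP_form[OF p, of x] by force
  then show ?thesis using phiP_mono[OF p order_refl assms(3), of x] by simp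
qed

lemma phiP_le_PhiP:
  fixes x :: "'a::euclidean_space"
  assumes p: "0 < p" "p < 1" and t: "0 \<le> t"
  shows "phiP p x t \<le> PhiP p t"
proof -
  obtain c where c: "c \<ge> ((1 + norm x) ^ DIM('a)) powr (1 - p)"
    "\<And>t. t\<ge>0 \<Longrightarrow> phiP p x t = t / (1 + c * t powr (1 - p))"
    using phiP_form[OF p, of x] by blast
  have "1 \<le> ((1 + norm x) ^ DIM('a)) powr (1 - p)"
    using p by (intro ge_one_powr_ge_zero) auto
  then have c1: "1 \<le> c" using c(1) by linarith
  have "t powr (1 - p) \<le> c * t powr (1 - p)"
    using c1 by (simp add: mult_le_cancel_right1)
  then have "t / (1 + c * t powr (1 - p)) \<le> t / (1 + t powr (1 - p))"
    using t c1 by (intro divide_left_mono) (auto intro!: add_pos_nonneg mult_pos_pos mult_nonneg_nonneg)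
  then show ?thesis using c(2)[OF t] unfolding PhiP_def by simp
qed

lemma phiP_le_pow:
  fixes x :: "'a::euclidean_space"
  assumes p: "0 < p" "p < 1" and t: "0 \<le> t"
  shows "phiP p x t \<le> t powr p * ((1 + norm x) ^ DIM('a)) powr (p - 1)"
proof (cases "t = 0")
  case True then show ?thesis using phiP_form[OF p, of x] by auto
next
  case False
  then have t0: "0 < t" using t by simp
  define W where "W = ((1 + norm x) ^ DIM('a)) powr (1 - p)"
  have nx: "1 + norm x \<noteq> 0" using norm_ge_zero[of x] by linarith
  have W0: "0 < W" unfolding W_def using nx by simp
  obtain c where c: "c \<ge> W"
    "\<And>t. t\<ge>0 \<Longrightarrow> phiP p x t = t / (1 + c * t powr (1 - p))"
    using phiP_form[OF p, of x] unfolding W_def by blast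
  have "t / (1 + c * t powr (1 - p)) \<le> t / (W * t powr (1 - p))"
  proof -
    have "W * t powr (1 - p) \<le> c * t powr (1 - p)" using c(1) by (intro mult_right_mono) auto
    moreover have "0 < c * t powr (1 - p)" using W0 c(1) t0 by simp
    moreover have tq: "0 < t powr (1 - p)" using t0 by simp
    ultimately have a: "W * t powr (1 - p) \<le> 1 + c * t powr (1 - p)" and
      b0: "0 < 1 + c * t powr (1 - p)" by linarith+
    have b1: "0 < W * t powr (1 - p)" using W0 tq by (rule mult_pos_pos)
    have b: "0 < (1 + c * t powr (1 - p)) * (W * t powr (1 - p))" using b0 b1 by (rule mult_pos_pos)
    show ?thesis using t0 by (intro divide_left_mono[OF a]) (use b in auto)

  qed
  also have "\<dots> = t powr p / W"
    using t0 W0 by (simp add: powr_diff field_simps)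
  also have "\<dots> = t powr p * ((1 + norm x) ^ DIM('a)) powr (p - 1)"
  proof -
    have "1 + norm x \<noteq> 0" using norm_ge_zero[of x] by linarith
    then show ?thesis unfolding W_def by (simp add: powr_minus_divide[symmetric] divide_inverse powr_minus[symmetric])
  qed
  finally show ?thesis using c(2)[OF t] by simp
qed



lemma schwartz_decay:
  assumes "schwartz \<phi>"
  shows "\<exists>C. \<forall>x. (1 + norm x) ^ N * norm (\<phi> x) \<le> C"
proof -
  have "\<forall>N::nat. \<exists>C. \<forall>x. (1 + norm x) ^ N * norm (ideriv [] \<phi> x) \<le> C"
    using assms unfolding schwartz_def by (metis empty_subsetI list.set(1))
  then show ?thesis by simp
qed

lemma schwartz_dirderiv_bound:
  fixes \<phi> :: "'a::euclidean_space \<Rightarrow> complex"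
  assumes "schwartz \<phi>"
  shows "\<exists>D. \<forall>b\<in>Basis. \<forall>x. norm (dirderiv b \<phi> x) \<le> D"
proof -
  have "\<forall>b\<in>Basis. \<exists>C. \<forall>x. norm (dirderiv b \<phi> x) \<le> C"
  proof
    fix b :: 'a assume b: "b \<in> Basis"
    then have "set [b] \<subseteq> Basis" by simp
    then have "\<forall>N::nat. \<exists>C. \<forall>x. (1 + norm x) ^ N * norm (ideriv [b] \<phi> x) \<le> C"
      using assms unfolding schwartz_def by blast
    then have "\<exists>C. \<forall>x. (1 + norm x) ^ 0 * norm (ideriv [b] \<phi> x) \<le> C" by blast
    then show "\<exists>C. \<forall>x. norm (dirderiv b \<phi> x) \<le> C" by simp
  qed
  then obtain C where C: "\<forall>b\<in>Basis. \<forall>x. norm (dirderiv b \<phi> x) \<le> C b" by metis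
  have "norm (dirderiv b \<phi> x) \<le> (\<Sum>b\<in>Basis. \<bar>C b\<bar>)" if "b \<in> Basis" for b x
  proof -
    have "norm (dirderiv b \<phi> x) \<le> C b" using C that by blast
    then have "norm (dirderiv b \<phi> x) \<le> \<bar>C b\<bar>" by linarith
    also have "\<dots> \<le> (\<Sum>b\<in>Basis. \<bar>C b\<bar>)" using that by (intro member_le_sum) auto
    finally show ?thesis .
  qed
  then show ?thesis by blast
qed

lemma schwartz_line_deriv:
  fixes \<phi> :: "'a::euclidean_space \<Rightarrow> complex"
  assumes "schwartz \<phi>" "b \<in> Basis"
  shows "((\<lambda>t. \<phi> (x + t *\<^sub>R b)) has_vector_derivative dirderiv b \<phi> (x + t0 *\<^sub>R b)) (at t0)"
proof -
  define y where "y = x + t0 *\<^sub>R b"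
  have "\<forall>v\<in>Basis. \<forall>x. (\<lambda>t::real. ideriv [] \<phi> (x + t *\<^sub>R v)) differentiable (at 0)"
    using assms unfolding schwartz_def by (metis empty_subsetI list.set(1))
  then have "(\<lambda>s. \<phi> (y + s *\<^sub>R b)) differentiable (at 0)" using assms(2) by simp
  then have h: "((\<lambda>s. \<phi> (y + s *\<^sub>R b)) has_vector_derivative dirderiv b \<phi> y) (at 0)"
    unfolding dirderiv_def by (simp add: vector_derivative_works)
  have f: "((\<lambda>t. t - t0) has_vector_derivative 1) (at t0)"
    by (auto intro!: derivative_eq_intros)
  have "(((\<lambda>s. \<phi> (y + s *\<^sub>R b)) \<circ> (\<lambda>t. t - t0)) has_vector_derivative (1 *\<^sub>R dirderiv b \<phi> y)) (at t0)"
    by (rule vector_diff_chain_at[OF f]) (simp add: h)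
  moreover have "((\<lambda>s. \<phi> (y + s *\<^sub>R b)) \<circ> (\<lambda>t. t - t0)) = (\<lambda>t. \<phi> (x + t *\<^sub>R b))"
    by (auto simp: y_def fun_eq_iff algebra_simps)
  ultimately show ?thesis by (simp add: y_def)
qed

lemma schwartz_line_lip:
  fixes \<phi> :: "'a::euclidean_space \<Rightarrow> complex"
  assumes "schwartz \<phi>" "b \<in> Basis" and D: "\<forall>b\<in>Basis. \<forall>x. norm (dirderiv b \<phi> x) \<le> D"
  shows "norm (\<phi> (x + t *\<^sub>R b) - \<phi> x) \<le> D * \<bar>t\<bar>"
proof -
  let ?g = "\<lambda>t. \<phi> (x + t *\<^sub>R b)"
  have "norm (?g t - ?g 0) \<le> D * norm (t - 0)"
  proof (rule differentiable_bound[where S=UNIV and f' = "\<lambda>s h. h *\<^sub>R dirderiv b \<phi> (x + s *\<^sub>R b)"])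
    fix s :: real
    show "(?g has_derivative (\<lambda>h. h *\<^sub>R dirderiv b \<phi> (x + s *\<^sub>R b))) (at s within UNIV)"
      using schwartz_line_deriv[OF assms(1,2), of x s] unfolding has_vector_derivative_def by simp
    show "onorm (\<lambda>h. h *\<^sub>R dirderiv b \<phi> (x + s *\<^sub>R b)) \<le> D"
      using onorm_scaleR_left[OF bounded_linear_ident, of "dirderiv b \<phi> (x + s *\<^sub>R b)"] D assms(2)
      by (simp add: onorm_id)
  qed auto
  then show ?thesis by simp
qed

lemma schwartz_lip_sum:
  fixes \<phi> :: "'a::euclidean_space \<Rightarrow> complex"
  assumes "schwartz \<phi>" and D: "\<forall>b\<in>Basis. \<forall>x. norm (dirderiv b \<phi> x) \<le> D"
    and "finite B" "B \<subseteq> Basis"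
  shows "norm (\<phi> (x + (\<Sum>b\<in>B. c b *\<^sub>R b)) - \<phi> x) \<le> (\<Sum>b\<in>B. D * \<bar>c b\<bar>)"
  using assms(3,4)
proof (induction B rule: finite_induct)
  case empty then show ?case by simp
next
  case (insert a B)
  let ?y = "x + (\<Sum>b\<in>B. c b *\<^sub>R b)"
  have "norm (\<phi> (?y + c a *\<^sub>R a) - \<phi> ?y) \<le> D * \<bar>c a\<bar>"
    using schwartz_line_lip[OF assms(1) _ D] insert by auto
  moreover have "norm (\<phi> ?y - \<phi> x) \<le> (\<Sum>b\<in>B. D * \<bar>c b\<bar>)" using insert by auto
  moreover have "x + (\<Sum>b\<in>insert a B. c b *\<^sub>R b) = ?y + c a *\<^sub>R a" using insert by (simp add: algebra_simps)
  ultimately show ?case using insert norm_triangle_ineq[of "\<phi> (?y + c a *\<^sub>R a) - \<phi> ?y" "\<phi> ?y - \<phi> x"]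
    by (simp only: sum.insert) simp
qed

lemma schwartz_lipschitz:
  fixes \<phi> :: "'a::euclidean_space \<Rightarrow> complex"
  assumes "schwartz \<phi>"
  shows "\<exists>L. \<forall>x y. norm (\<phi> y - \<phi> x) \<le> L * norm (y - x)"
proof -
  obtain D where D: "\<forall>b\<in>Basis. \<forall>x. norm (dirderiv b \<phi> x) \<le> D"
    using schwartz_dirderiv_bound[OF assms] by blast
  have D0: "0 \<le> D" using D SOME_Basis norm_ge_zero order.trans by blast
  show ?thesis
  proof (intro exI allI)
    fix x y :: 'a
    have "y = x + (\<Sum>b\<in>Basis. ((y - x) \<bullet> b) *\<^sub>R b)"
      by (simp add: euclidean_representation)
    then have "norm (\<phi> y - \<phi> x) \<le> (\<Sum>b\<in>Basis. D * \<bar>(y - x) \<bullet> b\<bar>)"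
      using schwartz_lip_sum[OF assms D finite_Basis order_refl, of x "\<lambda>b. (y - x) \<bullet> b"] by simp
    also have "\<dots> \<le> (\<Sum>b\<in>(Basis::'a set). D * norm (y - x))"
      using D0 by (intro sum_mono mult_left_mono) (auto simp: Basis_le_norm)
    also have "\<dots> = (D * real DIM('a)) * norm (y - x)" by simp
    finally show "norm (\<phi> y - \<phi> x) \<le> (D * real DIM('a)) * norm (y - x)" .
  qed
qed



definition e0 :: "'a::euclidean_space" where "e0 = (SOME b. b \<in> Basis)"

lemma e0_Basis: "e0 \<in> Basis" unfolding e0_def by (rule someI_ex) (use nonempty_Basis in blast)

lemma norm_e0[simp]: "norm (e0::'a::euclidean_space) = 1" using e0_Basis by (rule norm_Basis)

definition xs :: "nat \<Rightarrow> 'a::euclidean_space" where "xs j = (2 ^ j) *\<^sub>R e0"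

lemma norm_xs[simp]: "norm (xs j :: 'a::euclidean_space) = 2 ^ j" by (simp add: xs_def)

lemma norm_xs_diff:
  assumes "j \<noteq> k"
  shows "norm (xs j - xs k :: 'a::euclidean_space) \<ge> 2 ^ j / 2"
proof -
  have "xs j - xs k = (2 ^ j - 2 ^ k :: real) *\<^sub>R (e0::'a)" by (simp add: xs_def algebra_simps)
  then have eq: "norm (xs j - xs k :: 'a) = \<bar>2 ^ j - 2 ^ k :: real\<bar>" by simp
  show ?thesis
  proof (cases "j < k")
    case True
    then have "(2::real) ^ Suc j \<le> 2 ^ k" by (intro power_increasing) auto
    then have "(2::real) ^ j \<le> 2 ^ k / 2" by simp
    moreover have "(0::real) < 2 ^ j" by simp
    ultimately have "(2::real) ^ j - 2 ^ k \<le> 0" by linarith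
    then have "\<bar>2 ^ j - 2 ^ k :: real\<bar> = 2 ^ k - 2 ^ j" by (subst abs_of_nonpos) auto
    then show ?thesis using eq \<open>(2::real) ^ j \<le> 2 ^ k / 2\<close> by simp
  next
    case False
    then have "k < j" using assms by simp
    then have "(2::real) ^ Suc k \<le> 2 ^ j" by (intro power_increasing) auto
    then have "(2::real) ^ k \<le> 2 ^ j / 2" by simp
    moreover have "(0::real) < 2 ^ k" by simp
    ultimately have "(2::real) ^ j - 2 ^ k \<ge> 0" by linarith
    then have "\<bar>2 ^ j - 2 ^ k :: real\<bar> = 2 ^ j - 2 ^ k" by (subst abs_of_nonneg) auto
    then show ?thesis using eq \<open>(2::real) ^ k \<le> 2 ^ j / 2\<close> by simp
  qed
qed

definition Tw :: "('a::euclidean_space \<Rightarrow> complex) \<Rightarrow> complex" where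
  "Tw f = (\<Sum>j. f (xs j))"

lemma decay_xs:
  fixes f :: "'a::euclidean_space \<Rightarrow> complex"
  assumes "\<forall>x. (1 + norm x) * norm (f x) \<le> C"
  shows "norm (f (xs j)) \<le> C * (1/2) ^ j"
proof -
  have "(1 + 2 ^ j) * norm (f (xs j)) \<le> C" using assms[rule_format, of "xs j"] by simp
  moreover have "2 ^ j * norm (f (xs j)) \<le> (1 + 2 ^ j) * norm (f (xs j))"
    by (intro mult_right_mono) auto
  ultimately have "2 ^ j * norm (f (xs j)) \<le> C" by linarith
  then show ?thesis by (simp add: field_simps power_divide)
qed

lemma summable_xs:
  fixes f :: "'a::euclidean_space \<Rightarrow> complex"
  assumes "\<forall>x. (1 + norm x) * norm (f x) \<le> C"
  shows "summable (\<lambda>j. f (xs j))"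
  by (rule summable_comparison_test[OF _ summable_mult[OF summable_geometric[of "1/2::real"]]])
     (use decay_xs[OF assms] in auto)

lemma schwartz_decay1:
  assumes "schwartz f"
  shows "\<exists>C. \<forall>x. (1 + norm x) * norm (f x) \<le> C"
  using schwartz_decay[OF assms, of 1] by simp

lemma tempered_Tw: "tempered (Tw :: ('a::euclidean_space \<Rightarrow> complex) \<Rightarrow> complex)"
  unfolding tempered_def
proof (intro conjI allI impI)
  fix f g :: "'a \<Rightarrow> complex" assume f: "schwartz f" and g: "schwartz g"
  obtain C1 where "\<forall>x. (1 + norm x) * norm (f x) \<le> C1" using schwartz_decay1[OF f] by blast
  then have sf: "summable (\<lambda>j. f (xs j))" by (rule summable_xs)
  obtain C2 where "\<forall>x. (1 + norm x) * norm (g x) \<le> C2" using schwartz_decay1[OF g] by blast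
  then have sg: "summable (\<lambda>j. g (xs j))" by (rule summable_xs)
  show "Tw (\<lambda>x. f x + g x) = Tw f + Tw g" unfolding Tw_def using suminf_add[OF sf sg] by simp
next
  fix f :: "'a \<Rightarrow> complex" and c assume f: "schwartz f"
  obtain C1 where "\<forall>x. (1 + norm x) * norm (f x) \<le> C1" using schwartz_decay1[OF f] by blast
  then have sf: "summable (\<lambda>j. f (xs j))" by (rule summable_xs)
  show "Tw (\<lambda>x. c * f x) = c * Tw f" unfolding Tw_def using suminf_mult[OF sf, of c] by simp
next
  have eqset: "{ds::'a list. set ds \<subseteq> Basis \<and> length ds \<le> 0} = {[]}" by auto
  show "\<exists>C N M. \<forall>f. schwartz f \<longrightarrow>
        norm (Tw f) \<le> C * (\<Sum>ds\<in>{ds::'a list. set ds \<subseteq> Basis \<and> length ds \<le> M}. sw_seminorm N ds f)"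
  proof (intro exI allI impI)
    fix f :: "'a \<Rightarrow> complex" assume f: "schwartz f"
    define S where "S = sw_seminorm 1 [] f"
    obtain C1 where C1: "\<forall>x. (1 + norm x) * norm (f x) \<le> C1" using schwartz_decay1[OF f] by blast
    have S: "\<forall>x. (1 + norm x) * norm (f x) \<le> S"
    proof
      fix x
      have "bdd_above (range (\<lambda>x. (1 + norm x) ^ 1 * norm (ideriv [] f x)))"
        using C1 by (auto intro!: bdd_aboveI)
      then show "(1 + norm x) * norm (f x) \<le> S"
        unfolding S_def sw_seminorm_def using cSUP_upper[of x UNIV] by force
    qed
    have sf: "summable (\<lambda>j. norm (f (xs j)))"
      by (rule summable_comparison_test[OF _ summable_mult[OF summable_geometric[of "1/2::real"]]])
         (use decay_xs[OF S] in auto)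
    have "norm (Tw f) \<le> (\<Sum>j. norm (f (xs j)))" unfolding Tw_def by (rule summable_norm[OF sf])
    also have "\<dots> \<le> (\<Sum>j. S * (1/2) ^ j)"
      by (intro suminf_le sf summable_mult summable_geometric) (use decay_xs[OF S] in auto)
    also have "\<dots> = 2 * S" using suminf_mult[OF summable_geometric[of "1/2::real"], of S]
      by (simp add: suminf_geometric)
    finally show "norm (Tw f) \<le> 2 * (\<Sum>ds\<in>{ds::'a list. set ds \<subseteq> Basis \<and> length ds \<le> 0}. sw_seminorm 1 ds f)"
      unfolding eqset S_def by simp
  qed
qed

lemma dconv_Tw: "dconv Tw \<psi> x = (\<Sum>j. \<psi> (x - xs j))"
  unfolding dconv_def Tw_def by simp



lemma ext_inf_phi_le:
  fixes x :: "'a::euclidean_space"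
  assumes p: "0 < p" "p < 1"
  shows "ext_inf (phiP p x) v \<le> ext_inf (PhiP p) v"
  unfolding ext_inf_def using phiP_le_PhiP[OF p, of "enn2real v" x]
  by (auto intro: ennreal_leI)

lemma h_incl:
  fixes \<phi> :: "'a::euclidean_space \<Rightarrow> complex"
  assumes p: "0 < p" "p < 1"
  shows "h_PhiP p \<phi> \<subseteq> h_phiP p \<phi>"
proof
  fix T assume T: "T \<in> h_PhiP p \<phi>"
  let ?g = "locmax T \<phi>"
  let ?A = "{l::real. 0 < l \<and> (\<integral>\<^sup>+ x. ext_inf (PhiP p) (?g x / ennreal l) \<partial>lborel) \<le> 1}"
  have "?A \<noteq> {}"
  proof
    assume "?A = {}"
    then have "LPhi_norm p ?g = \<infinity>" unfolding LPhi_norm_def by (simp only: image_empty Inf_empty top_ennreal.rep_eq) simp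
    then show False using T unfolding h_PhiP_def by simp
  qed
  then obtain l where l: "0 < l" "(\<integral>\<^sup>+ x. ext_inf (PhiP p) (?g x / ennreal l) \<partial>lborel) \<le> 1" by blast
  have "(\<integral>\<^sup>+ x. ext_inf (phiP p x) (?g x / ennreal l) \<partial>lborel) \<le> (\<integral>\<^sup>+ x. ext_inf (PhiP p) (?g x / ennreal l) \<partial>lborel)"
    by (intro nn_integral_mono ext_inf_phi_le p)
  with l have "l \<in> {l::real. 0 < l \<and> (\<integral>\<^sup>+ x. ext_inf (phiP p x) (?g x / ennreal l) \<partial>lborel) \<le> 1}"
    by simp
  then have "Lphi_norm p ?g \<le> ennreal l" unfolding Lphi_norm_def by (rule INF_lower)
  then have "Lphi_norm p ?g < \<infinity>" using le_less_trans by fastforce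
  then show "T \<in> h_phiP p \<phi>" using T unfolding h_PhiP_def h_phiP_def by simp
qed

lemma suminf_const_ennreal_inf:
  assumes "0 < m"
  shows "(\<Sum>k::nat. ennreal m) = \<infinity>"
proof (rule ccontr)
  assume "(\<Sum>k::nat. ennreal m) \<noteq> \<infinity>"
  then obtain r where r: "(\<Sum>k::nat. ennreal m) = ennreal r" "0 \<le> r"
    using ennreal_cases[of "\<Sum>k::nat. ennreal m"] by auto
  obtain N :: nat where N: "r / m < real N" using reals_Archimedean2 by blast
  have "sum (\<lambda>k. ennreal m) {..<N} \<le> (\<Sum>k::nat. ennreal m)"
    by (rule sum_le_suminf) auto
  then have "ennreal (real N * m) \<le> ennreal r" using r assms
    by (simp add: ennreal_of_nat_eq_real_of_nat ennreal_mult'[symmetric])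
  then have "real N * m \<le> r" using r(2) by (simp add: ennreal_le_iff)
  then show False using N assms by (simp add: field_simps)
qed

lemma suminf_split_one:
  fixes f :: "nat \<Rightarrow> 'b::real_normed_vector"
  assumes "summable f"
  shows "suminf f = f k + (\<Sum>j. if j = k then 0 else f j)"
proof -
  have s1: "(\<lambda>j. if j = k then f k else 0) sums f k" by (rule sums_single)
  have s2: "summable (\<lambda>j. if j = k then 0 else f j)"
    using summable_diff[OF assms summable_single[of k "\<lambda>_. f k"]]
    by (rule summable_cong[THEN iffD1, rotated]) auto
  have "f = (\<lambda>j. (if j = k then f k else 0) + (if j = k then 0 else f j))" by auto
  then have "suminf f = suminf (\<lambda>j. (if j = k then f k else 0) + (if j = k then 0 else f j))" by metis
  also have "\<dots> = f k + (\<Sum>j. if j = k then 0 else f j)"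
    using suminf_add[OF sums_summable[OF s1] s2] sums_unique[OF s1] by simp
  finally show ?thesis .
qed



lemma norm_dilate:
  fixes \<phi> :: "'a::euclidean_space \<Rightarrow> complex"
  assumes "0 < s"
  shows "norm (dilate s \<phi> y) = (1 / s ^ DIM('a)) * norm (\<phi> ((1 / s) *\<^sub>R y))"
  using assms unfolding dilate_def by (simp add: norm_mult norm_divide norm_power)

lemma decay_pt:
  fixes \<phi> :: "'a::euclidean_space \<Rightarrow> complex"
  assumes C1: "\<forall>y. (1 + norm y) * norm (\<phi> y) \<le> C1" and "0 < r" "r \<le> norm y"
  shows "norm (\<phi> y) \<le> C1 / r"
proof -
  have "r * norm (\<phi> y) \<le> (1 + norm y) * norm (\<phi> y)"
    using assms by (intro mult_right_mono) auto
  then have "r * norm (\<phi> y) \<le> C1" using C1 by (meson order.trans)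
  then show ?thesis using assms(2) by (simp add: field_simps)
qed

lemma locmax_lower:
  fixes \<phi> :: "'a::euclidean_space \<Rightarrow> complex"
  assumes s0: "0 < s0" "s0 < 1"
    and xk: "norm (x - xs k) \<le> 1/4"
    and eps: "0 < \<epsilon>" "\<epsilon> \<le> norm (\<phi> ((1 / s0) *\<^sub>R (x - xs k)))"
    and C1: "\<forall>y. (1 + norm y) * norm (\<phi> y) \<le> C1"
    and small: "8 * C1 * s0 \<le> \<epsilon> / 2"
  shows "ennreal (\<epsilon> / 2) \<le> locmax Tw \<phi> x"
proof -
  define K where "K = 1 / s0 ^ DIM('a)"
  have K1: "1 \<le> K" unfolding K_def using s0 by (simp add: power_le_one)
  define a where "a j = dilate s0 \<phi> (x - xs j)" for j
  define b where "b j = K * (4 * C1 * s0) * (1/2) ^ j" for j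
  have C10: "0 \<le> C1"
  proof -
    have "0 \<le> (1 + norm (0::'a)) * norm (\<phi> 0)" by simp
    then show ?thesis using C1[rule_format, of 0] by linarith
  qed
  have bnd: "norm (a j) \<le> b j" if "j \<noteq> k" for j
  proof -
    have "norm (xs j - xs k :: 'a) \<ge> 2 ^ j / 2" using norm_xs_diff[OF that] .
    moreover have "norm (xs j - xs k :: 'a) \<le> norm (x - xs j) + norm (x - xs k)"
    proof -
      have "xs j - xs k = (x - xs k) - (x - xs j :: 'a)" by simp
      then show ?thesis using norm_triangle_ineq4[of "x - xs k" "x - xs j"] by (simp add: add.commute)
    qed
    moreover have "(1::real) \<le> 2 ^ j" by simp
    ultimately have d: "2 ^ j / 4 \<le> norm (x - xs j)" using xk by linarith
    have "norm ((1 / s0) *\<^sub>R (x - xs j)) = norm (x - xs j) / s0" using s0 by simp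
    then have "2 ^ j / 4 / s0 \<le> norm ((1 / s0) *\<^sub>R (x - xs j))"
      using divide_right_mono[OF d, of s0] s0 by simp
    then have "norm (\<phi> ((1 / s0) *\<^sub>R (x - xs j))) \<le> C1 / (2 ^ j / 4 / s0)"
      using s0 by (intro decay_pt[OF C1]) auto
    also have "\<dots> = (4 * C1 * s0) * (1/2) ^ j" by (simp add: field_simps power_divide)
    finally have "K * norm (\<phi> ((1 / s0) *\<^sub>R (x - xs j))) \<le> K * ((4 * C1 * s0) * (1/2) ^ j)"
      using K1 by (intro mult_left_mono) auto
    then show ?thesis unfolding a_def b_def norm_dilate[OF s0(1), of \<phi> "x - xs j"] K_def
      by (simp add: mult.assoc)
  qed
  have sb: "summable b" unfolding b_def by (intro summable_mult summable_geometric) auto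
  have b0: "0 \<le> b j" for j unfolding b_def using K1 C10 s0 by simp
  have ab: "norm (a j) \<le> b j + (if j = k then norm (a j) else 0)" for j
    using bnd[of j] b0[of j] by auto
  have sg: "summable (\<lambda>j. b j + (if j = k then norm (a j) else 0))"
    by (rule summable_add[OF sb summable_single])
  have sa: "summable a"
    by (rule summable_comparison_test'[OF sg, of 0]) (rule ab)
  have bnd': "norm (if j = k then 0 else a j) \<le> b j" for j
    using bnd[of j] b0[of j] by auto
  have sn: "summable (\<lambda>j. norm (if j = k then 0 else a j))"
    by (rule summable_comparison_test'[OF sb, of 0]) (use bnd' in simp)
  define R where "R = (\<Sum>j. if j = k then 0 else a j)"
  have "norm R \<le> (\<Sum>j. norm (if j = k then 0 else a j))"
    unfolding R_def
    by (rule summable_norm[OF sn])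
  also have "\<dots> \<le> (\<Sum>j. b j)"
    by (rule suminf_le[OF bnd' sn sb])
  also have "\<dots> = K * (4 * C1 * s0) * 2"
    unfolding b_def using suminf_mult[OF summable_geometric[of "1/2::real"], of "K * (4 * C1 * s0)"]
    by (simp add: suminf_geometric)
  finally have nR: "norm R \<le> K * (8 * C1 * s0)" by simp
  have nak: "K * \<epsilon> \<le> norm (a k)" unfolding a_def norm_dilate[OF s0(1)] K_def[symmetric]
    using eps K1 by (intro mult_left_mono) auto
  have "dconv Tw (dilate s0 \<phi>) x = a k + R"
    unfolding dconv_Tw R_def a_def[symmetric] by (rule suminf_split_one[OF sa])
  then have "norm (dconv Tw (dilate s0 \<phi>) x) \<ge> norm (a k) - norm R"
    using norm_diff_ineq[of "a k" R] by simp
  moreover have "K * (8 * C1 * s0) \<le> K * (\<epsilon> / 2)" using K1 small by (intro mult_left_mono) auto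
  ultimately have "K * (\<epsilon> / 2) \<le> norm (dconv Tw (dilate s0 \<phi>) x)" using nak nR by (simp add: algebra_simps)
  moreover have "\<epsilon> / 2 \<le> K * (\<epsilon> / 2)" using K1 eps by (simp add: mult_le_cancel_right1)
  ultimately have "\<epsilon> / 2 \<le> norm (dconv Tw (dilate s0 \<phi>) x)" by linarith
  then have "ennreal (\<epsilon> / 2) \<le> ennreal (norm (dconv Tw (dilate s0 \<phi>) x))" by (rule ennreal_leI)
  also have "\<dots> \<le> locmax Tw \<phi> x" unfolding locmax_def using s0 by (intro SUP_upper) auto
  finally show ?thesis .
qed



lemma ext_inf_PhiP_lower:
  assumes p: "0 < p" "p < 1" and "0 \<le> c" and "ennreal c \<le> v"
  shows "ennreal (PhiP p c) \<le> ext_inf (PhiP p) v"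
proof (cases "v = \<infinity>")
  case True then show ?thesis unfolding ext_inf_def by simp
next
  case False
  then have "v = ennreal (enn2real v)" by (simp add: less_top ennreal_enn2real)
  then have "c \<le> enn2real v" using assms(3,4) by (metis ennreal_le_iff enn2real_nonneg)
  then have "PhiP p c \<le> PhiP p (enn2real v)" using PhiP_mono[OF p assms(3)] by simp
  then show ?thesis using False unfolding ext_inf_def by (simp add: ennreal_leI)
qed

lemma Tw_notin:
  fixes \<phi> :: "'a::euclidean_space \<Rightarrow> complex"
  assumes p: "0 < p" "p < 1" and sch: "schwartz \<phi>" and int: "integral UNIV \<phi> \<noteq> 0"
  shows "Tw \<notin> h_PhiP p \<phi>"
proof
  assume T: "Tw \<in> h_PhiP p \<phi>"
  let ?g = "locmax Tw \<phi>"
  let ?A = "{l::real. 0 < l \<and> (\<integral>\<^sup>+ x. ext_inf (PhiP p) (?g x / ennreal l) \<partial>lborel) \<le> 1}"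
  have "?A \<noteq> {}"
  proof
    assume "?A = {}"
    then have "LPhi_norm p ?g = \<infinity>" unfolding LPhi_norm_def by (simp only: image_empty Inf_empty top_ennreal.rep_eq) simp
    then show False using T unfolding h_PhiP_def by simp
  qed
  then obtain l where l: "0 < l" "(\<integral>\<^sup>+ x. ext_inf (PhiP p) (?g x / ennreal l) \<partial>lborel) \<le> 1" by blast
  obtain z0 where z0: "\<phi> z0 \<noteq> 0"
  proof (rule ccontr)
    assume "\<not> thesis"
    with that have "\<phi> = (\<lambda>_. 0)" by auto
    then show False using int by simp
  qed
  define \<epsilon> where "\<epsilon> = norm (\<phi> z0) / 2"
  have eps: "0 < \<epsilon>" unfolding \<epsilon>_def using z0 by simp
  obtain L where L: "\<forall>x y. norm (\<phi> y - \<phi> x) \<le> L * norm (y - x)" using schwartz_lipschitz[OF sch] by blast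
  define L' where "L' = max L 1"
  have L': "\<forall>x y::'a. norm (\<phi> y - \<phi> x) \<le> L' * norm (y - x)" "0 < L'"
  proof -
    show "0 < L'" unfolding L'_def by simp
    show "\<forall>x y::'a. norm (\<phi> y - \<phi> x) \<le> L' * norm (y - x)"
    proof (intro allI)
      fix x y :: 'a
      have "L * norm (y - x) \<le> L' * norm (y - x)" unfolding L'_def by (intro mult_right_mono) auto
      then show "norm (\<phi> y - \<phi> x) \<le> L' * norm (y - x)" using L by (meson order.trans)
    qed
  qed
  define \<delta> where "\<delta> = min 1 (\<epsilon> / L')"
  have del: "0 < \<delta>" "\<delta> \<le> 1" "L' * \<delta> \<le> \<epsilon>" unfolding \<delta>_def using eps L'(2)
    by (auto simp: min_def field_simps)
  have near: "\<epsilon> \<le> norm (\<phi> z)" if "norm (z - z0) < \<delta>" for z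
  proof -
    have "norm (\<phi> z0 - \<phi> z) \<le> L' * norm (z0 - z)" using L'(1) by blast
    also have "\<dots> \<le> L' * \<delta>" using that L'(2) by (intro mult_left_mono) (auto simp: norm_minus_commute)
    also have "\<dots> \<le> \<epsilon>" by (rule del(3))
    finally have "norm (\<phi> z0) - norm (\<phi> z) \<le> \<epsilon>" using norm_triangle_ineq2[of "\<phi> z0" "\<phi> z"] by linarith
    then show ?thesis unfolding \<epsilon>_def by simp
  qed
  obtain C1 where C1: "\<forall>y. (1 + norm y) * norm (\<phi> y) \<le> C1" using schwartz_decay1[OF sch] by blast
  have C10: "0 \<le> C1"
  proof -
    have "0 \<le> (1 + norm (0::'a)) * norm (\<phi> 0)" by simp
    then show ?thesis using C1[rule_format, of 0] by linarith
  qed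
  define s0 where "s0 = min (1 / (4 * (norm z0 + 1))) (\<epsilon> / (16 * (C1 + 1)))"
  have s0: "0 < s0" "s0 < 1" "s0 * (norm z0 + 1) \<le> 1/4" "8 * C1 * s0 \<le> \<epsilon> / 2"
  proof -
    have a: "0 < 1 / (4 * (norm z0 + 1))" by (simp add: add_nonneg_pos)
    have b: "0 < \<epsilon> / (16 * (C1 + 1))" using eps C10 by simp
    show "0 < s0" unfolding s0_def using a b by simp
    have "1 / (4 * (norm z0 + 1)) \<le> 1/4" by (simp add: divide_simps add_nonneg_pos)
    then show "s0 < 1" unfolding s0_def by linarith
    have "s0 \<le> 1 / (4 * (norm z0 + 1))" unfolding s0_def by simp
    then have "s0 * (norm z0 + 1) \<le> 1 / (4 * (norm z0 + 1)) * (norm z0 + 1)"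
      by (intro mult_right_mono) auto
    also have "1 / (4 * (norm z0 + 1)) * (norm z0 + 1) = 1/4"
    proof -
      have "norm z0 + 1 \<noteq> 0" using norm_ge_zero[of z0] by linarith
      then show ?thesis by simp
    qed
    finally show "s0 * (norm z0 + 1) \<le> 1/4" .
    have "s0 \<le> \<epsilon> / (16 * (C1 + 1))" unfolding s0_def by simp
    then have "8 * C1 * s0 \<le> 8 * C1 * (\<epsilon> / (16 * (C1 + 1)))" using C10 by (intro mult_left_mono) auto
    also have "\<dots> = (\<epsilon> / 2) * (C1 / (C1 + 1))" using C10 by (simp add: field_simps)
    also have "\<dots> \<le> (\<epsilon> / 2) * 1" using eps C10 by (intro mult_left_mono) auto
    finally show "8 * C1 * s0 \<le> \<epsilon> / 2" by simp
  qed
  define B where "B k = ball (xs k + s0 *\<^sub>R z0) (s0 * \<delta>)" for k :: nat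
  have inB: "norm (x - xs k) < 1/4 \<and> \<epsilon> \<le> norm (\<phi> ((1 / s0) *\<^sub>R (x - xs k)))" if "x \<in> B k" for x k
  proof
    have d: "norm (x - (xs k + s0 *\<^sub>R z0)) < s0 * \<delta>" using that unfolding B_def by (simp add: dist_norm norm_minus_commute)
    have "norm (x - xs k) \<le> norm (x - (xs k + s0 *\<^sub>R z0)) + norm (s0 *\<^sub>R z0)"
      using norm_triangle_ineq[of "x - (xs k + s0 *\<^sub>R z0)" "s0 *\<^sub>R z0"] by (simp add: algebra_simps)
    also have "\<dots> < s0 * \<delta> + s0 * norm z0" using d s0 by simp
    also have "\<dots> \<le> s0 * (norm z0 + 1)" using del s0 by (simp add: algebra_simps)
    finally show "norm (x - xs k) < 1/4" using s0 by linarith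
    have "(1 / s0) *\<^sub>R (x - xs k) - z0 = (1 / s0) *\<^sub>R (x - (xs k + s0 *\<^sub>R z0))"
      using s0 by (simp add: algebra_simps)
    then have "norm ((1 / s0) *\<^sub>R (x - xs k) - z0) = norm (x - (xs k + s0 *\<^sub>R z0)) / s0"
      using s0 by simp
    also have "\<dots> < \<delta>" using d s0 by (simp add: field_simps)
    finally show "\<epsilon> \<le> norm (\<phi> ((1 / s0) *\<^sub>R (x - xs k)))" by (rule near)
  qed
  have lowg: "ennreal (\<epsilon> / 2) \<le> ?g x" if "x \<in> B k" for x k
    using inB[OF that] by (intro locmax_lower[OF s0(1,2) _ eps _ C1 s0(4)]) (auto intro: less_imp_le)
  have disj: "disjoint_family B"
    unfolding disjoint_family_on_def
  proof (intro ballI impI)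
    fix j k :: nat assume "j \<noteq> k"
    show "B j \<inter> B k = {}"
    proof (rule ccontr)
      assume "B j \<inter> B k \<noteq> {}"
      then obtain x where x: "x \<in> B j" "x \<in> B k" by blast
      have "norm (xs j - xs k :: 'a) \<le> norm (x - xs j) + norm (x - xs k)"
      proof -
        have "xs j - xs k = (x - xs k) - (x - xs j :: 'a)" by simp
        then show ?thesis using norm_triangle_ineq4[of "x - xs k" "x - xs j"] by (simp add: add.commute)
      qed
      then have "norm (xs j - xs k :: 'a) < 1/2" using inB[OF x(1)] inB[OF x(2)] by linarith
      moreover have "norm (xs j - xs k :: 'a) \<ge> 2 ^ j / 2" using norm_xs_diff[OF \<open>j \<noteq> k\<close>] .
      moreover have "(1::real) \<le> 2 ^ j" by simp
      ultimately show False by linarith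
    qed
  qed
  have Bsets: "B k \<in> sets lborel" for k unfolding B_def by simp
  define m where "m = (s0 * \<delta>) ^ DIM('a) * measure lborel (ball (0::'a) 1)"
  have m0: "0 < m" unfolding m_def using s0 del content_ball_pos[of 1 "0::'a"] by simp
  have mB: "emeasure lborel (B k) = ennreal m" for k
  proof -
    have "emeasure lborel (B k) = ennreal (measure lborel (B k))"
      using emeasure_lborel_ball_finite[of "xs k + s0 *\<^sub>R z0" "s0 * \<delta>"] unfolding B_def
      by (intro emeasure_eq_ennreal_measure) (simp add: less_top[symmetric])
    also have "measure lborel (B k) = m" unfolding B_def m_def
      using s0 del by (intro content_ball_conv_unit_ball) simp
    finally show ?thesis .
  qed
  have UB: "emeasure lborel (\<Union>k. B k) = \<infinity>"
  proof -
    have "range B \<subseteq> sets lborel" using Bsets by auto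
    then have "(\<Sum>k. emeasure lborel (B k)) = emeasure lborel (\<Union>k. B k)"
      using suminf_emeasure[of B lborel] disj by blast
    then show ?thesis using mB suminf_const_ennreal_inf[OF m0] by simp
  qed
  define c where "c = PhiP p (\<epsilon> / 2 / l)"
  have c0: "0 < c" unfolding c_def using eps l(1) by (intro PhiP_pos) simp
  have pw: "ennreal c * indicator (\<Union>k. B k) x \<le> ext_inf (PhiP p) (?g x / ennreal l)" for x
  proof (cases "x \<in> (\<Union>k. B k)")
    case True
    then obtain k where "x \<in> B k" by blast
    then have "ennreal (\<epsilon> / 2) / ennreal l \<le> ?g x / ennreal l"
      by (intro divide_right_mono_ennreal lowg)
    then have "ennreal (\<epsilon> / 2 / l) \<le> ?g x / ennreal l"
      using eps l(1) by (simp add: divide_ennreal)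
    then have "ennreal c \<le> ext_inf (PhiP p) (?g x / ennreal l)"
      unfolding c_def using eps l(1) by (intro ext_inf_PhiP_lower[OF p]) auto
    then show ?thesis using True by simp
  next
    case False then show ?thesis by simp
  qed
  have "(\<integral>\<^sup>+ x. ennreal c * indicator (\<Union>k. B k) x \<partial>lborel) \<le> (\<integral>\<^sup>+ x. ext_inf (PhiP p) (?g x / ennreal l) \<partial>lborel)"
    by (intro nn_integral_mono pw)
  moreover have "(\<integral>\<^sup>+ x. ennreal c * indicator (\<Union>k. B k) x \<partial>lborel) = \<infinity>"
    using Bsets c0 by (subst nn_integral_cmult_indicator) (auto simp: UB ennreal_mult_top)
  ultimately show False using l(2) by (simp add: top_unique)
qed



lemma powr_add_le:
  fixes x y p :: real
  assumes "0 \<le> x" "0 \<le> y" "0 < p" "p \<le> 1"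
  shows "(x + y) powr p \<le> x powr p + y powr p"
proof (cases "x + y = 0")
  case True then show ?thesis using assms by simp
next
  case False
  then have s: "0 < x + y" using assms by simp
  have rx: "x / (x + y) \<le> (x / (x + y)) powr p"
    using powr_mono'[of p 1 "x / (x + y)"] assms s by simp
  have ry: "y / (x + y) \<le> (y / (x + y)) powr p"
    using powr_mono'[of p 1 "y / (x + y)"] assms s by simp
  have "1 = x / (x + y) + y / (x + y)" using s by (simp add: add_divide_distrib[symmetric])
  also have "\<dots> \<le> x powr p / (x + y) powr p + y powr p / (x + y) powr p"
    using rx ry assms by (simp add: powr_divide)
  also have "\<dots> = (x powr p + y powr p) / (x + y) powr p" by (simp add: add_divide_distrib)
  finally show ?thesis using s by (simp add: divide_simps split: if_splits)
qed

lemma powr_sum_le: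
  fixes a :: "nat \<Rightarrow> real"
  assumes "\<And>j. 0 \<le> a j" "0 < p" "p \<le> 1"
  shows "(\<Sum>j<m. a j) powr p \<le> (\<Sum>j<m. a j powr p)"
proof (induction m)
  case 0 then show ?case by simp
next
  case (Suc m)
  have "(\<Sum>j<Suc m. a j) powr p \<le> (\<Sum>j<m. a j) powr p + a m powr p"
    using powr_add_le[of "\<Sum>j<m. a j" "a m" p] assms by (simp add: sum_nonneg)
  then show ?case using Suc by simp
qed

lemma powr_suminf_le:
  fixes a :: "nat \<Rightarrow> real"
  assumes "\<And>j. 0 \<le> a j" "0 < p" "p \<le> 1" "summable a" "summable (\<lambda>j. a j powr p)"
  shows "(\<Sum>j. a j) powr p \<le> (\<Sum>j. a j powr p)"
proof (cases "(\<Sum>j. a j) = 0")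
  case True then show ?thesis using suminf_nonneg[OF assms(5)] by simp
next
  case False
  have "(\<lambda>m. (\<Sum>j<m. a j) powr p) \<longlonglongrightarrow> (\<Sum>j. a j) powr p"
    using assms(2) False by (intro tendsto_powr summable_LIMSEQ assms(4)) auto
  moreover have "(\<Sum>j<m. a j) powr p \<le> (\<Sum>j. a j powr p)" for m
  proof -
    have "(\<Sum>j<m. a j) powr p \<le> (\<Sum>j<m. a j powr p)" by (rule powr_sum_le[OF assms(1-3)])
    also have "\<dots> \<le> (\<Sum>j. a j powr p)" by (rule sum_le_suminf[OF assms(5)]) auto
    finally show ?thesis .
  qed
  ultimately show ?thesis by (intro LIMSEQ_le_const2) auto
qed



lemma key_ineq:
  fixes s r :: real
  assumes "0 < s" "s < 1" "0 < r" "n \<le> N"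
  shows "(1 / s ^ n) / (1 + r / s) ^ N \<le> 1 / r ^ n" "(1 / s ^ n) / (1 + r / s) ^ N \<le> 1 / r ^ N"
proof -
  have e1: "(1 + r / s) ^ N = (s + r) ^ N / s ^ N" using assms by (simp add: power_divide field_simps)
  have e2: "s ^ N = s ^ (N - n) * s ^ n" using assms(4) by (simp add: power_add[symmetric])
  have sr: "0 < s + r" using assms by simp
  have eq: "(1 / s ^ n) / (1 + r / s) ^ N = s ^ (N - n) / (s + r) ^ N"
    unfolding e1 e2 using assms sr by (simp add: field_simps)
  have "s ^ (N - n) * r ^ n \<le> (s + r) ^ (N - n) * (s + r) ^ n"
    using assms by (intro mult_mono power_mono) auto
  also have "\<dots> = (s + r) ^ N" using assms(4) by (simp add: power_add[symmetric])
  finally have "s ^ (N - n) / (s + r) ^ N \<le> 1 / r ^ n" using assms sr by (simp add: field_simps)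
  then show "(1 / s ^ n) / (1 + r / s) ^ N \<le> 1 / r ^ n" using eq by simp
  have "s ^ (N - n) \<le> 1" using assms by (simp add: power_le_one)
  moreover have "r ^ N \<le> (s + r) ^ N" using assms by (intro power_mono) auto
  ultimately have "s ^ (N - n) * r ^ N \<le> 1 * (s + r) ^ N" using assms by (intro mult_mono) auto
  then have "s ^ (N - n) / (s + r) ^ N \<le> 1 / r ^ N" using assms sr by (simp add: field_simps)
  then show "(1 / s ^ n) / (1 + r / s) ^ N \<le> 1 / r ^ N" using eq by simp
qed

definition aa :: "real \<Rightarrow> nat \<Rightarrow> nat \<Rightarrow> real \<Rightarrow> real" where
  "aa C n N r = C * (if r \<le> 1 then r powr (- real n) else r powr (- real N))"

lemma aa_nonneg: "0 \<le> C \<Longrightarrow> 0 \<le> aa C n N r"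
  unfolding aa_def by simp

lemma dil_bound:
  fixes \<phi> :: "'a::euclidean_space \<Rightarrow> complex"
  assumes s: "0 < s" "s < 1" and nN: "DIM('a) \<le> N"
    and C: "\<forall>z. (1 + norm z) ^ N * norm (\<phi> z) \<le> C" and y: "y \<noteq> 0"
  shows "norm (dilate s \<phi> y) \<le> aa C DIM('a) N (norm y)"
proof -
  define r where "r = norm y"
  have r: "0 < r" using y unfolding r_def by simp
  have "0 < 1 + r / s" using r s by (simp add: add_pos_pos)
  then have pos: "0 < (1 + r / s) ^ N" by simp
  have "norm ((1 / s) *\<^sub>R y) = r / s" unfolding r_def using s by simp
  then have "(1 + r / s) ^ N * norm (\<phi> ((1 / s) *\<^sub>R y)) \<le> C" using C by metis
  then have ph: "norm (\<phi> ((1 / s) *\<^sub>R y)) \<le> C / (1 + r / s) ^ N" using pos by (simp add: field_simps)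
  have C0: "0 \<le> C"
  proof -
    have "0 \<le> (1 + norm (0::'a)) ^ N * norm (\<phi> 0)" by simp
    then show ?thesis using C[rule_format, of 0] by linarith
  qed
  have "norm (dilate s \<phi> y) = (1 / s ^ DIM('a)) * norm (\<phi> ((1 / s) *\<^sub>R y))"
    by (rule norm_dilate[OF s(1)])
  also have "\<dots> \<le> (1 / s ^ DIM('a)) * (C / (1 + r / s) ^ N)"
    using s by (intro mult_left_mono ph) auto
  also have "\<dots> = C * ((1 / s ^ DIM('a)) / (1 + r / s) ^ N)" by simp
  also have "\<dots> \<le> aa C DIM('a) N r"
  proof (cases "r \<le> 1")
    case True
    then have "aa C DIM('a) N r = C * (1 / r ^ DIM('a))"
      unfolding aa_def using r by (simp add: powr_minus powr_realpow divide_inverse)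
    then show ?thesis using mult_left_mono[OF key_ineq(1)[OF s r nN] C0] by simp
  next
    case False
    then have "aa C DIM('a) N r = C * (1 / r ^ N)"
      unfolding aa_def using r by (simp add: powr_minus powr_realpow divide_inverse)
    then show ?thesis using mult_left_mono[OF key_ineq(2)[OF s r nN] C0] by simp
  qed
  finally show ?thesis unfolding r_def .
qed



lemma pw_upper:
  fixes \<phi> :: "'a::euclidean_space \<Rightarrow> complex"
  assumes p: "0 < p" "p < 1" and nN: "DIM('a) \<le> N"
    and C: "\<forall>z. (1 + norm z) ^ N * norm (\<phi> z) \<le> C" and x: "x \<notin> range xs" and l: "0 < l"
  shows "ext_inf (phiP p x) (locmax Tw \<phi> x / ennreal l)
     \<le> ennreal (l powr (- p)) * (\<Sum>j. ennreal (aa C DIM('a) N (norm (x - xs j)) powr p * ((1 + norm x) ^ DIM('a)) powr (p - 1)))"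
    (is "?L \<le> ennreal ?lp * ?S")
proof -
  define A where "A j = aa C DIM('a) N (norm (x - xs j))" for j
  define Wp where "Wp = ((1 + norm x) ^ DIM('a)) powr (p - 1)"
  have C0: "0 \<le> C"
  proof -
    have "0 \<le> (1 + norm (0::'a)) ^ N * norm (\<phi> 0)" by simp
    then show ?thesis using C[rule_format, of 0] by linarith
  qed
  have A0: "0 \<le> A j" for j unfolding A_def by (rule aa_nonneg[OF C0])
  have Wp0: "0 < Wp" unfolding Wp_def
  proof -
    have "0 < 1 + norm x" using norm_ge_zero[of x] by linarith
    then show "0 < ((1 + norm x) ^ DIM('a)) powr (p - 1)" by simp
  qed
  have lp0: "0 < ?lp" using l by simp
  show ?thesis
  proof (cases "?S = \<infinity>")
    case True
    then show ?thesis using lp0 by (simp add: ennreal_mult_top)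
  next
    case False
    have nn: "0 \<le> A j powr p * Wp" for j using Wp0 by simp
    have sAW: "summable (\<lambda>j. A j powr p * Wp)"
      using False unfolding A_def Wp_def by (intro summable_suminf_not_top) auto
    have Seq: "?S = ennreal (\<Sum>j. A j powr p * Wp)"
      unfolding A_def[symmetric] Wp_def[symmetric] by (rule suminf_ennreal2[OF nn sAW])
    have sAp: "summable (\<lambda>j. A j powr p)"
      using summable_mult[OF sAW, of "1 / Wp"] Wp0 by simp
    have "(\<lambda>j. A j powr p) \<longlonglongrightarrow> 0" by (rule summable_LIMSEQ_zero[OF sAp])
    then have "eventually (\<lambda>j. A j powr p < 1) sequentially"
      by (rule order_tendstoD) simp
    then have ev: "eventually (\<lambda>j. norm (A j) \<le> A j powr p) sequentially"
    proof (rule eventually_mono)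
      fix j assume a: "A j powr p < 1"
      have "A j \<le> 1"
      proof (rule ccontr)
        assume "\<not> A j \<le> 1"
        then have "1 \<le> A j powr p" using p by (intro ge_one_powr_ge_zero) auto
        then show False using a by simp
      qed
      then have "A j powr 1 \<le> A j powr p" using p A0[of j] by (intro powr_mono') auto
      then show "norm (A j) \<le> A j powr p" using A0[of j] by (cases "A j = 0") auto
    qed
    have sA: "summable A" by (rule summable_comparison_test_ev[OF ev sAp])
    define S where "S = (\<Sum>j. A j)"
    have S0: "0 \<le> S" unfolding S_def by (rule suminf_nonneg[OF sA A0])
    have Sp: "S powr p \<le> (\<Sum>j. A j powr p)"
      unfolding S_def using p by (intro powr_suminf_le A0 sA sAp) auto
    have dl: "norm (dilate s \<phi> (x - xs j)) \<le> A j" if s: "0 < s" "s < 1" for s j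
    proof -
      have "x - xs j \<noteq> 0" using x by auto
      then show ?thesis unfolding A_def by (rule dil_bound[OF s nN C])
    qed
    have loc: "locmax Tw \<phi> x \<le> ennreal S"
      unfolding locmax_def
    proof (rule SUP_least)
      fix s :: real assume "s \<in> {0<..<1}"
      then have s: "0 < s" "s < 1" by auto
      have sn: "summable (\<lambda>j. norm (dilate s \<phi> (x - xs j)))"
        by (rule summable_comparison_test'[OF sA, of 0]) (use dl[OF s] in simp)
      have "norm (dconv Tw (dilate s \<phi>) x) \<le> (\<Sum>j. norm (dilate s \<phi> (x - xs j)))"
        unfolding dconv_Tw by (rule summable_norm[OF sn])
      also have "\<dots> \<le> S" unfolding S_def by (rule suminf_le[OF dl[OF s] sn sA])
      finally show "ennreal (norm (dconv Tw (dilate s \<phi>) x)) \<le> ennreal S" by (rule ennreal_leI)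
    qed
    have v: "locmax Tw \<phi> x / ennreal l \<le> ennreal (S / l)"
      using divide_right_mono_ennreal[OF loc, of "ennreal l"] S0 l by (simp add: divide_ennreal)
    then have vfin: "locmax Tw \<phi> x / ennreal l \<noteq> \<infinity>" by (auto simp: top_unique)
    have t: "enn2real (locmax Tw \<phi> x / ennreal l) \<le> S / l"
      using v S0 l by (simp add: enn2real_leI)
    have "phiP p x (enn2real (locmax Tw \<phi> x / ennreal l)) \<le> phiP p x (S / l)"
      using t by (intro phiP_mono[OF p]) auto
    also have "\<dots> \<le> (S / l) powr p * Wp" unfolding Wp_def
      using S0 l by (intro phiP_le_pow[OF p]) auto
    also have "(S / l) powr p = ?lp * S powr p" using S0 l
      by (simp add: powr_divide powr_minus field_simps)
    also have "?lp * S powr p * Wp \<le> ?lp * (\<Sum>j. A j powr p) * Wp"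
      using Sp lp0 Wp0 by (intro mult_right_mono mult_left_mono) auto
    also have "\<dots> = ?lp * (\<Sum>j. A j powr p * Wp)"
      using suminf_mult2[OF sAp, of Wp] by simp
    finally have "phiP p x (enn2real (locmax Tw \<phi> x / ennreal l)) \<le> ?lp * (\<Sum>j. A j powr p * Wp)" .
    then have "?L \<le> ennreal (?lp * (\<Sum>j. A j powr p * Wp))"
      unfolding ext_inf_def using vfin by (simp add: ennreal_leI)
    also have "\<dots> = ennreal ?lp * ?S" unfolding Seq using lp0 suminf_nonneg[OF sAW nn]
      by (intro ennreal_mult) auto
    finally show ?thesis .
  qed
qed



definition fb :: "real \<Rightarrow> real \<Rightarrow> real" where
  "fb p u = \<bar>u\<bar> powr (- p) * (1 + \<bar>u\<bar>) powr (- 2)"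

lemma fb_nonneg: "0 \<le> fb p u" unfolding fb_def by simp

lemma fb_meas[measurable]: "fb p \<in> borel_measurable borel"
  unfolding fb_def by measurable

definition hb :: "real \<Rightarrow> real \<Rightarrow> ennreal" where
  "hb p u = ennreal (\<bar>u\<bar> powr (- p)) * indicator {0..1} u + ennreal (\<bar>u\<bar> powr (- 2)) * indicator {1..} u"

lemma hb_meas[measurable]: "hb p \<in> borel_measurable borel"
  unfolding hb_def by measurable

lemma fb_le_hb:
  assumes p: "0 < p"
  shows "ennreal (fb p u) \<le> hb p u + hb p (- u)"
proof -
  have a: "ennreal (fb p u) \<le> ennreal (\<bar>u\<bar> powr (- p))" if "\<bar>u\<bar> \<le> 1"
  proof -
    have "(1 + \<bar>u\<bar>) powr (- 2) \<le> 1 powr (- 2)"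
      by (intro powr_mono2') auto
    then have "(1 + \<bar>u\<bar>) powr (- 2) \<le> 1" by simp
    then have "fb p u \<le> \<bar>u\<bar> powr (- p) * 1" unfolding fb_def by (intro mult_left_mono) auto
    then show ?thesis by (intro ennreal_leI) simp
  qed
  have b: "ennreal (fb p u) \<le> ennreal (\<bar>u\<bar> powr (- 2))" if "1 \<le> \<bar>u\<bar>"
  proof -
    have "\<bar>u\<bar> powr (- p) \<le> 1 powr (- p)" using that p by (intro powr_mono2') auto
    then have "\<bar>u\<bar> powr (- p) \<le> 1" by simp
    moreover have "(1 + \<bar>u\<bar>) powr (- 2) \<le> \<bar>u\<bar> powr (- 2)"
      using that by (intro powr_mono2') auto
    ultimately have "fb p u \<le> 1 * \<bar>u\<bar> powr (- 2)" unfolding fb_def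
      by (intro mult_mono) auto
    then show ?thesis by (intro ennreal_leI) simp
  qed
  have h1: "ennreal (\<bar>u\<bar> powr (- p)) \<le> hb p u" if "0 \<le> u" "u \<le> 1" for u
    unfolding hb_def using that by (simp add: add_increasing2)
  have h2: "ennreal (\<bar>u\<bar> powr (- 2)) \<le> hb p u" if "1 \<le> u" for u
    unfolding hb_def using that by (simp add: add_increasing)
  have hh: "hb p u \<le> hb p u + hb p (- u)" "hb p (- u) \<le> hb p u + hb p (- u)"
    by (simp_all add: add_increasing2 add_increasing)
  show ?thesis
  proof (cases "0 \<le> u")
    case True
    show ?thesis
    proof (cases "u \<le> 1")
      case True
      then have "\<bar>u\<bar> \<le> 1" using \<open>0 \<le> u\<close> by simp
      then show ?thesis using order_trans[OF a order_trans[OF h1[of u] hh(1)]] \<open>0 \<le> u\<close> True by simp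
    next
      case False
      then have "1 \<le> \<bar>u\<bar>" "1 \<le> u" using \<open>0 \<le> u\<close> by simp_all
      then show ?thesis using order_trans[OF b order_trans[OF h2[of u] hh(1)]] by simp
    qed
  next
    case False
    show ?thesis
    proof (cases "- 1 \<le> u")
      case True
      then have "\<bar>u\<bar> \<le> 1" "0 \<le> - u" "- u \<le> 1" using False by simp_all
      moreover have "ennreal (\<bar>u\<bar> powr (- p)) \<le> hb p (- u)" using h1[of "- u"] \<open>0 \<le> - u\<close> \<open>- u \<le> 1\<close> by simp
      ultimately show ?thesis using order_trans[OF a order_trans[OF _ hh(2)]] by simp
    next
      case F2: False
      then have "1 \<le> \<bar>u\<bar>" "1 \<le> - u" using False by simp_all
      moreover have "ennreal (\<bar>u\<bar> powr (- 2)) \<le> hb p (- u)" using h2[of "- u"] \<open>1 \<le> - u\<close> by simp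
      ultimately show ?thesis using order_trans[OF b order_trans[OF _ hh(2)]] by simp
    qed
  qed
qed

lemma hb_int:
  assumes p: "0 < p" "p < 1"
  shows "(\<integral>\<^sup>+ u. hb p u \<partial>lborel) = ennreal (1 / (1 - p)) + ennreal 1"
proof -
  have i1: "((\<lambda>u. \<bar>u\<bar> powr (- p)) has_integral (1 / (1 - p))) {0..1}"
  proof -
    have "((\<lambda>u. u powr (- p)) has_integral (1 powr (- p + 1) / (- p + 1))) {0..1}"
      using p by (intro has_integral_powr_from_0) auto
    moreover have "1 powr (- p + 1) / (- p + 1) = 1 / (1 - p)" by simp
    ultimately show ?thesis by (subst has_integral_cong[of _ _ "\<lambda>u. u powr (- p)"]) auto
  qed
  have i2: "((\<lambda>u. \<bar>u\<bar> powr (- 2)) has_integral 1) {1::real..}"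
  proof -
    have "((\<lambda>u. u powr (- 2)) has_integral (- (1 powr (- 2 + 1)) / (- 2 + 1))) {1::real..}"
      by (intro has_integral_powr_to_inf) auto
    then show ?thesis by (subst has_integral_cong[of _ _ "\<lambda>u. u powr (- 2::real)"]) auto
  qed
  have "(\<integral>\<^sup>+ u. hb p u \<partial>lborel) = (\<integral>\<^sup>+ u. ennreal (\<bar>u\<bar> powr (- p)) * indicator {0..1} u \<partial>lborel)
     + (\<integral>\<^sup>+ u. ennreal (\<bar>u\<bar> powr (- 2)) * indicator {1..} u \<partial>lborel)"
    unfolding hb_def by (rule nn_integral_add) auto
  also have "\<dots> = ennreal (1 / (1 - p)) + ennreal 1"
    using nn_integral_has_integral_lebesgue'[OF _ i1] nn_integral_has_integral_lebesgue'[OF _ i2] by simp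
  finally show ?thesis .
qed

lemma fb_int_finite:
  assumes p: "0 < p" "p < 1"
  shows "(\<integral>\<^sup>+ u. ennreal (fb p u) \<partial>lborel) < \<infinity>"
proof -
  have "(\<integral>\<^sup>+ u. ennreal (fb p u) \<partial>lborel) \<le> (\<integral>\<^sup>+ u. hb p u + hb p (- u) \<partial>lborel)"
    by (intro nn_integral_mono fb_le_hb p)
  also have "\<dots> = (\<integral>\<^sup>+ u. hb p u \<partial>lborel) + (\<integral>\<^sup>+ u. hb p (- u) \<partial>lborel)"
    by (rule nn_integral_add) auto
  also have "(\<integral>\<^sup>+ u. hb p (- u) \<partial>lborel) = (\<integral>\<^sup>+ u. hb p u \<partial>lborel)"
    using nn_integral_real_affine[of "hb p" "-1" 0] by simp
  finally have "(\<integral>\<^sup>+ u. ennreal (fb p u) \<partial>lborel) \<le> (ennreal (1 / (1 - p)) + ennreal 1) + (ennreal (1 / (1 - p)) + ennreal 1)"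
    using hb_int[OF p] by simp
  moreover have "(ennreal (1 / (1 - p)) + ennreal 1) + (ennreal (1 / (1 - p)) + ennreal 1) < \<infinity>"
    by simp
  ultimately show ?thesis by (rule le_less_trans)
qed



lemma majorant:
  fixes y :: "'a::euclidean_space"
  assumes p: "0 < p" "p < 1" and NP: "3 * real DIM('a) \<le> real N * p" and C0: "0 \<le> C"
    and y: "\<forall>b\<in>Basis. y \<bullet> b \<noteq> 0"
  shows "aa C DIM('a) N (norm y) powr p * (1 + norm y) powr (real DIM('a) * (1 - p))
    \<le> C powr p * 2 powr (real DIM('a) * (3 - p)) * (\<Prod>b\<in>Basis. fb p (y \<bullet> b))"
proof -
  define n where "n = real DIM('a)"
  define r where "r = norm y"
  define E where "E = n * (3 - p)"
  define \<beta> where "\<beta> = n * (1 - p)"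
  have n0: "0 < n" unfolding n_def by simp
  have E0: "0 \<le> E" unfolding E_def using n0 p by simp
  have "y \<noteq> 0" using y nonempty_Basis by fastforce
  then have r0: "0 < r" unfolding r_def by simp
  have r1: "0 < 1 + r" using r0 by simp
  have fbl: "r powr (- p) * (1 + r) powr (- 2) \<le> fb p (y \<bullet> b)" if "b \<in> Basis" for b
  proof -
    have yb: "0 < \<bar>y \<bullet> b\<bar>" "\<bar>y \<bullet> b\<bar> \<le> r" using y that Basis_le_norm[OF that, of y] unfolding r_def by auto
    have "r powr (- p) \<le> \<bar>y \<bullet> b\<bar> powr (- p)" using yb p by (intro powr_mono2') auto
    moreover have "(1 + r) powr (- 2) \<le> (1 + \<bar>y \<bullet> b\<bar>) powr (- 2)" using yb by (intro powr_mono2') auto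
    ultimately show ?thesis unfolding fb_def by (intro mult_mono) auto
  qed
  have "(\<Prod>b\<in>(Basis::'a set). r powr (- p) * (1 + r) powr (- 2)) \<le> (\<Prod>b\<in>Basis. fb p (y \<bullet> b))"
    using fbl by (intro prod_mono) auto
  moreover have "(\<Prod>b\<in>(Basis::'a set). r powr (- p) * (1 + r) powr (- 2)) = r powr (- n * p) * (1 + r) powr (- 2 * n)"
    unfolding n_def using r0 r1 by (simp add: power_mult_distrib powr_power mult_ac)
  ultimately have P: "r powr (- n * p) * (1 + r) powr (- 2 * n) \<le> (\<Prod>b\<in>Basis. fb p (y \<bullet> b))" by simp
  define T where "T = (if r \<le> 1 then r powr (- n) else r powr (- real N))"
  have T0: "0 \<le> T" unfolding T_def by simp
  have aa_eq: "aa C DIM('a) N r powr p = C powr p * T powr p"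
    unfolding aa_def T_def[symmetric] n_def[symmetric] using C0 T0 by (simp add: powr_mult)
  have split: "(1 + r) powr \<beta> = (1 + r) powr E * (1 + r) powr (- 2 * n)"
    unfolding \<beta>_def E_def by (simp add: powr_add[symmetric] algebra_simps)
  have main: "T powr p * (1 + r) powr \<beta> \<le> 2 powr E * (r powr (- n * p) * (1 + r) powr (- 2 * n))"
  proof (cases "r \<le> 1")
    case True
    then have Tp: "T powr p = r powr (- n * p)" unfolding T_def by (simp add: powr_powr)
    have "(1 + r) powr E \<le> 2 powr E" using True r0 E0 by (intro powr_mono2) auto
    then have "r powr (- n * p) * ((1 + r) powr E * (1 + r) powr (- 2 * n))
       \<le> r powr (- n * p) * (2 powr E * (1 + r) powr (- 2 * n))"
      by (intro mult_left_mono mult_right_mono) auto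
    then show ?thesis unfolding Tp split by (simp add: mult_ac)
  next
    case False
    then have Tp: "T powr p = r powr (- real N * p)" unfolding T_def by (simp add: powr_powr)
    have "(1 + r) powr E \<le> (2 * r) powr E" using False r0 E0 by (intro powr_mono2) auto
    also have "\<dots> = 2 powr E * r powr E" by (simp add: powr_mult)
    finally have a: "(1 + r) powr E \<le> 2 powr E * r powr E" .
    have "r powr (- real N * p) * r powr E = r powr (E - real N * p)" by (simp add: powr_add[symmetric])
    also have "\<dots> \<le> r powr (- n * p)" using False NP unfolding E_def n_def
      by (intro powr_mono) (auto simp: algebra_simps)
    finally have b: "r powr (- real N * p) * r powr E \<le> r powr (- n * p)" .
    have "r powr (- real N * p) * ((1 + r) powr E * (1 + r) powr (- 2 * n))
       \<le> r powr (- real N * p) * ((2 powr E * r powr E) * (1 + r) powr (- 2 * n))"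
      using a by (intro mult_left_mono mult_right_mono) auto
    also have "\<dots> = 2 powr E * (r powr (- real N * p) * r powr E) * (1 + r) powr (- 2 * n)" by (simp add: mult_ac)
    also have "\<dots> \<le> 2 powr E * r powr (- n * p) * (1 + r) powr (- 2 * n)"
      using b by (intro mult_left_mono mult_right_mono) auto
    finally show ?thesis unfolding Tp split by (simp add: mult_ac)
  qed
  have "aa C DIM('a) N r powr p * (1 + r) powr \<beta> = C powr p * (T powr p * (1 + r) powr \<beta>)"
    unfolding aa_eq by simp
  also have "\<dots> \<le> C powr p * (2 powr E * (r powr (- n * p) * (1 + r) powr (- 2 * n)))"
    by (intro mult_left_mono main) auto
  also have "\<dots> \<le> C powr p * (2 powr E * (\<Prod>b\<in>Basis. fb p (y \<bullet> b)))"
    by (intro mult_left_mono P) auto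
  finally show ?thesis unfolding r_def \<beta>_def E_def n_def by (simp add: mult_ac)
qed



lemma fb_shift:
  "(\<integral>\<^sup>+ t. ennreal (fb p (t - c)) \<partial>lborel) = (\<integral>\<^sup>+ t. ennreal (fb p t) \<partial>lborel)"
  using nn_integral_real_affine[of "\<lambda>t. ennreal (fb p (t - c))" 1 c] by simp

lemma int_j:
  fixes xj :: "'a::euclidean_space"
  assumes p: "0 < p" "p < 1" and NP: "3 * real DIM('a) \<le> real N * p" and C0: "0 \<le> C"
  shows "(\<integral>\<^sup>+ x. ennreal (aa C DIM('a) N (norm (x - xj)) powr p * ((1 + norm x) ^ DIM('a)) powr (p - 1)) \<partial>lborel)
    \<le> ennreal ((1 + norm xj) powr (- (real DIM('a) * (1 - p))) * (C powr p * 2 powr (real DIM('a) * (3 - p))))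
       * (\<integral>\<^sup>+ u. ennreal (fb p u) \<partial>lborel) ^ DIM('a)"
proof -
  define \<beta> where "\<beta> = real DIM('a) * (1 - p)"
  define K where "K = (1 + norm xj) powr (- \<beta>) * (C powr p * 2 powr (real DIM('a) * (3 - p)))"
  have K0: "0 \<le> K" unfolding K_def by simp
  have \<beta>0: "0 \<le> \<beta>" unfolding \<beta>_def using p by simp
  have AE: "AE x in lborel. \<forall>b\<in>Basis. (x - xj) \<bullet> b \<noteq> 0"
  proof -
    have "\<forall>b\<in>Basis. AE x in lborel. x \<bullet> b \<noteq> xj \<bullet> b" using AE_lborel_inner_neq by blast
    then have "AE x in lborel. \<forall>b\<in>Basis. x \<bullet> b \<noteq> xj \<bullet> b" by (intro eventually_ball_finite) auto
    then show ?thesis by eventually_elim (simp add: inner_diff_left)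
  qed
  have pw: "ennreal (aa C DIM('a) N (norm (x - xj)) powr p * ((1 + norm x) ^ DIM('a)) powr (p - 1))
      \<le> ennreal K * (\<Prod>b\<in>Basis. ennreal (fb p (x \<bullet> b - xj \<bullet> b)))"
    if x: "\<forall>b\<in>Basis. (x - xj) \<bullet> b \<noteq> 0" for x
  proof -
    define y where "y = x - xj"
    have nx: "0 < 1 + norm x" using norm_ge_zero[of x] by linarith
    have ny: "0 < 1 + norm y" using norm_ge_zero[of y] by linarith
    have W: "((1 + norm x) ^ DIM('a)) powr (p - 1) = (1 + norm x) powr (- \<beta>)"
      unfolding \<beta>_def using nx by (simp add: powr_realpow[symmetric] powr_powr algebra_simps)
    have "norm xj \<le> norm x + norm y" unfolding y_def using norm_triangle_ineq4[of x "x - xj"] by simp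
    then have "1 + norm xj \<le> (1 + norm x) * (1 + norm y)"
      by (simp add: algebra_simps) (smt (verit) mult_nonneg_nonneg norm_ge_zero)
    then have "(1 + norm xj) powr \<beta> \<le> ((1 + norm x) * (1 + norm y)) powr \<beta>"
      using \<beta>0 by (intro powr_mono2) auto
    also have "\<dots> = (1 + norm x) powr \<beta> * (1 + norm y) powr \<beta>" by (simp add: powr_mult)
    finally have "(1 + norm xj) powr \<beta> \<le> (1 + norm x) powr \<beta> * (1 + norm y) powr \<beta>" .
    moreover have "1 + norm xj \<noteq> 0" "1 + norm x \<noteq> 0" using norm_ge_zero[of xj] nx by linarith+
    ultimately have Wb: "(1 + norm x) powr (- \<beta>) \<le> (1 + norm xj) powr (- \<beta>) * (1 + norm y) powr \<beta>"
      by (simp add: powr_minus field_simps)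
    have "aa C DIM('a) N (norm y) powr p * ((1 + norm x) ^ DIM('a)) powr (p - 1)
        \<le> aa C DIM('a) N (norm y) powr p * ((1 + norm xj) powr (- \<beta>) * (1 + norm y) powr \<beta>)"
      unfolding W by (intro mult_left_mono Wb) auto
    also have "\<dots> = (1 + norm xj) powr (- \<beta>) * (aa C DIM('a) N (norm y) powr p * (1 + norm y) powr \<beta>)"
      by (simp add: mult_ac)
    also have "\<dots> \<le> (1 + norm xj) powr (- \<beta>) * (C powr p * 2 powr (real DIM('a) * (3 - p)) * (\<Prod>b\<in>Basis. fb p (y \<bullet> b)))"
      using majorant[OF p NP C0, of y] x unfolding y_def \<beta>_def by (intro mult_left_mono) auto
    also have "\<dots> = K * (\<Prod>b\<in>Basis. fb p (x \<bullet> b - xj \<bullet> b))"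
      unfolding K_def y_def by (simp add: inner_diff_left mult_ac)
    finally have "aa C DIM('a) N (norm (x - xj)) powr p * ((1 + norm x) ^ DIM('a)) powr (p - 1)
       \<le> K * (\<Prod>b\<in>Basis. fb p (x \<bullet> b - xj \<bullet> b))" unfolding y_def .
    then show ?thesis using K0
      by (simp add: prod_ennreal fb_nonneg ennreal_mult[symmetric] prod_nonneg ennreal_leI)
  qed
  have "(\<integral>\<^sup>+ x. ennreal (aa C DIM('a) N (norm (x - xj)) powr p * ((1 + norm x) ^ DIM('a)) powr (p - 1)) \<partial>lborel)
     \<le> (\<integral>\<^sup>+ x. ennreal K * (\<Prod>b\<in>Basis. ennreal (fb p (x \<bullet> b - xj \<bullet> b))) \<partial>lborel)"
    by (intro nn_integral_mono_AE) (use AE pw in \<open>auto elim: AE_mp\<close>)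
  also have "\<dots> = ennreal K * (\<integral>\<^sup>+ x. (\<Prod>b\<in>Basis. ennreal (fb p (x \<bullet> b - xj \<bullet> b))) \<partial>lborel)"
    by (rule nn_integral_cmult) measurable
  also have "(\<integral>\<^sup>+ x. (\<Prod>b\<in>Basis. ennreal (fb p (x \<bullet> b - xj \<bullet> b))) \<partial>lborel)
     = (\<Prod>b\<in>(Basis::'a set). (\<integral>\<^sup>+ t. ennreal (fb p (t - xj \<bullet> b)) \<partial>lborel))"
    by (rule nn_integral_lborel_prod[where f = "\<lambda>b t. ennreal (fb p (t - xj \<bullet> b))"]) auto
  also have "\<dots> = (\<integral>\<^sup>+ u. ennreal (fb p u) \<partial>lborel) ^ DIM('a)"
    by (simp add: fb_shift)
  finally show ?thesis unfolding K_def \<beta>_def .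
qed



lemma aa_meas[measurable]: "aa C n N \<in> borel_measurable borel"
  unfolding aa_def by measurable

lemma geom_bound:
  assumes "0 \<le> \<beta>"
  shows "(1 + 2 ^ j :: real) powr (- \<beta>) \<le> (2 powr (- \<beta>)) ^ j"
proof -
  have "(1 + 2 ^ j :: real) powr (- \<beta>) \<le> (2 ^ j) powr (- \<beta>)"
    using assms by (intro powr_mono2') auto
  also have "(2 ^ j :: real) powr (- \<beta>) = (2 powr (- \<beta>)) ^ j"
    by (simp add: powr_realpow[symmetric] powr_powr powr_power mult_ac)
  finally show ?thesis .
qed

lemma Tw_in:
  fixes \<phi> :: "'a::euclidean_space \<Rightarrow> complex"
  assumes p: "0 < p" "p < 1" and sch: "schwartz \<phi>"
  shows "Tw \<in> h_phiP p \<phi>"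
proof -
  define n where "n = DIM('a)"
  define N where "N = nat (ceiling (3 * real n / p)) + n"
  have nN: "DIM('a) \<le> N" unfolding N_def n_def by simp
  have NP: "3 * real DIM('a) \<le> real N * p"
  proof -
    have "3 * real n / p \<le> real (nat (ceiling (3 * real n / p)))" by linarith
    then have "3 * real n / p * p \<le> real (nat (ceiling (3 * real n / p))) * p" using p by (intro mult_right_mono) auto
    then have "3 * real n \<le> real (nat (ceiling (3 * real n / p))) * p" using p by simp
    also have "\<dots> \<le> real N * p" unfolding N_def using p by (intro mult_right_mono) auto
    finally show ?thesis unfolding n_def .
  qed
  obtain C where C: "\<forall>z. (1 + norm z) ^ N * norm (\<phi> z) \<le> C" using schwartz_decay[OF sch] by blast
  have C0: "0 \<le> C"
  proof -
    have "0 \<le> (1 + norm (0::'a)) ^ N * norm (\<phi> 0)" by simp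
    then show ?thesis using C[rule_format, of 0] by linarith
  qed
  define F where "F = (\<integral>\<^sup>+ u. ennreal (fb p u) \<partial>lborel) ^ DIM('a)"
  have Ffin: "F < \<infinity>" unfolding F_def using fb_int_finite[OF p] by (simp add: power_less_top_ennreal)
  define \<beta> where "\<beta> = real DIM('a) * (1 - p)"
  have \<beta>0: "0 < \<beta>" unfolding \<beta>_def using p by simp
  define q where "q = 2 powr (- \<beta>)"
  have "q < 2 powr 0" unfolding q_def using \<beta>0 by (intro powr_less_mono) auto
  then have q: "0 < q" "q < 1" unfolding q_def by auto
  define K0 where "K0 = C powr p * 2 powr (real DIM('a) * (3 - p))"
  have K00: "0 \<le> K0" unfolding K0_def by simp
  define b where "b j x = ennreal (aa C DIM('a) N (norm (x - xs j)) powr p * ((1 + norm x) ^ DIM('a)) powr (p - 1))"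
    for j and x :: 'a
  have bj: "(\<integral>\<^sup>+ x. b j x \<partial>lborel) \<le> ennreal (q ^ j * K0) * F" for j
  proof -
    have "(\<integral>\<^sup>+ x. b j x \<partial>lborel) \<le> ennreal ((1 + norm (xs j :: 'a)) powr (- \<beta>) * K0) * F"
      unfolding b_def F_def K0_def \<beta>_def by (rule int_j[OF p NP C0])
    also have "\<dots> \<le> ennreal (q ^ j * K0) * F"
      unfolding q_def using geom_bound[of \<beta> j] \<beta>0 K00
      by (intro mult_right_mono ennreal_leI) (auto intro: mult_right_mono)
    finally show ?thesis .
  qed
  define Q where "Q = ennreal (K0 / (1 - q)) * F"
  have Qfin: "Q < \<infinity>" unfolding Q_def using Ffin by (simp add: ennreal_mult_less_top)
  have sumb: "(\<Sum>j. (\<integral>\<^sup>+ x. b j x \<partial>lborel)) \<le> Q"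
  proof -
    have "(\<Sum>j. (\<integral>\<^sup>+ x. b j x \<partial>lborel)) \<le> (\<Sum>j. ennreal (q ^ j * K0) * F)"
      by (intro suminf_le bj) auto
    also have "\<dots> = (\<Sum>j. ennreal (q ^ j * K0)) * F" by simp
    also have "(\<Sum>j. ennreal (q ^ j * K0)) = ennreal (\<Sum>j. q ^ j * K0)"
      using q K00 by (intro suminf_ennreal2 summable_mult2 summable_geometric) auto
    also have "(\<Sum>j. q ^ j * K0) = K0 / (1 - q)"
      using suminf_mult2[OF summable_geometric[of q], of K0] q by (simp add: suminf_geometric)
    finally show ?thesis unfolding Q_def .
  qed
  obtain Q' where Q': "Q = ennreal Q'" "0 \<le> Q'" using Qfin by (cases Q) auto
  define l where "l = (Q' + 1) powr (1 / p)"
  have l0: "0 < l" unfolding l_def using Q' by simp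
  have lp: "l powr (- p) = 1 / (Q' + 1)"
    unfolding l_def using Q' p by (simp add: powr_powr powr_minus divide_inverse)
  have AE: "AE x in lborel. x \<notin> range (xs :: nat \<Rightarrow> 'a)"
    by (intro AE_not_in countable_imp_null_set_lborel) auto
  have "(\<integral>\<^sup>+ x. ext_inf (phiP p x) (locmax Tw \<phi> x / ennreal l) \<partial>lborel)
     \<le> (\<integral>\<^sup>+ x. ennreal (l powr (- p)) * (\<Sum>j. b j x) \<partial>lborel)"
    unfolding b_def
    by (intro nn_integral_mono_AE) (use AE in \<open>auto elim!: AE_mp intro!: pw_upper[OF p nN C _ l0]\<close>)
  also have "\<dots> = ennreal (l powr (- p)) * (\<integral>\<^sup>+ x. (\<Sum>j. b j x) \<partial>lborel)"
    unfolding b_def by (rule nn_integral_cmult) measurable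
  also have "(\<integral>\<^sup>+ x. (\<Sum>j. b j x) \<partial>lborel) = (\<Sum>j. (\<integral>\<^sup>+ x. b j x \<partial>lborel))"
    unfolding b_def by (rule nn_integral_suminf) measurable
  also have "ennreal (l powr (- p)) * (\<Sum>j. (\<integral>\<^sup>+ x. b j x \<partial>lborel)) \<le> ennreal (l powr (- p)) * Q"
    by (intro mult_left_mono sumb) auto
  also have "\<dots> = ennreal (Q' / (Q' + 1))" unfolding lp Q'(1) using Q'(2)
    by (simp add: ennreal_mult[symmetric])
  also have "\<dots> \<le> 1" using Q'(2) by (simp add: ennreal_le_1)
  finally have "l \<in> {l::real. 0 < l \<and> (\<integral>\<^sup>+ x. ext_inf (phiP p x) (locmax Tw \<phi> x / ennreal l) \<partial>lborel) \<le> 1}"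
    using l0 by simp
  then have "Lphi_norm p (locmax Tw \<phi>) \<le> ennreal l" unfolding Lphi_norm_def by (rule INF_lower)
  then have "Lphi_norm p (locmax Tw \<phi>) < \<infinity>" using le_less_trans by fastforce
  then show ?thesis unfolding h_phiP_def using tempered_Tw by simp
qed

theorem theorem5p11:
  fixes p :: real and \<phi> :: "'a::euclidean_space \<Rightarrow> complex"
  assumes "0 < p" and "p < 1"
    and "schwartz \<phi>" and "integral UNIV \<phi> \<noteq> 0"
  shows "h_PhiP p \<phi> \<subset> h_phiP p \<phi>"
  using h_incl[OF assms(1,2)] Tw_in[OF assms(1,2,3)] Tw_notin[OF assms] by blast


end
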